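(* The number of decomposable orientations of the $n$-dimensional cube (all of which are unique sink orientations) is $2^{\Theta(2^n)}$.
   Context: Let $Q^n = 2^{[n]}$ be the vertex set of the $n$-cube, with $u,v$ adjacent iff $|u\oplus v|=1$; for $J\subseteq[n]$ and $v\in Q^n$ the face $F_{J,v}=\{u : v\oplus u\subseteq J\}$ has dimension $|J|$. For an orientation of the cube's edges and a face $F_{J,v}$, a coordinate $j\in J$ is combed in that face if all edges of the face in direction $j$ are directed the same way (all from the endpoint not containing $j$ to the endpoint containing $j$, or all the other way). An orientation is decomposable if every face of dimension at least $1$ has a combed coordinate. A unique sink orientation is an orientation in which every nonempty face has a unique sink. *)

theory Defs
  imports Complex_Main
begin

text \<open>Vertices of the n-cube: subsets of [n], here realised as {0..<n}.\<close>
definition cube :: "nat \<Rightarrow> nat set set" where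
  "cube n = Pow {..<n}"

definition symdiff :: "nat set \<Rightarrow> nat set \<Rightarrow> nat set" where
  "symdiff u v = (u - v) \<union> (v - u)"

definition adjacent :: "nat set \<Rightarrow> nat set \<Rightarrow> bool" where
  "adjacent u v \<longleftrightarrow> card (symdiff u v) = 1"

text \<open>An orientation of the n-cube: a set of directed edges (u,w) meaning u \<rightarrow> w,
  containing exactly one direction of every edge of the cube and nothing else.\<close>
definition orientation :: "nat \<Rightarrow> (nat set \<times> nat set) set \<Rightarrow> bool" where
  "orientation n D \<longleftrightarrow>
     D \<subseteq> cube n \<times> cube n \<and>
     (\<forall>(u, w) \<in> D. adjacent u w) \<and>
     (\<forall>u \<in> cube n. \<forall>w \<in> cube n. adjacent u w \<longrightarrow> ((u, w) \<in> D \<longleftrightarrow> (w, u) \<notin> D))"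

definition face :: "nat \<Rightarrow> nat set \<Rightarrow> nat set \<Rightarrow> nat set set" where
  "face n J v = {u \<in> cube n. symdiff v u \<subseteq> J}"

definition combed :: "nat \<Rightarrow> (nat set \<times> nat set) set \<Rightarrow> nat set \<Rightarrow> nat set \<Rightarrow> nat \<Rightarrow> bool" where
  "combed n D J v j \<longleftrightarrow> j \<in> J \<and>
     ((\<forall>u \<in> face n J v. j \<notin> u \<longrightarrow> (u, insert j u) \<in> D) \<or>
      (\<forall>u \<in> face n J v. j \<notin> u \<longrightarrow> (insert j u, u) \<in> D))"

definition decomposable :: "nat \<Rightarrow> (nat set \<times> nat set) set \<Rightarrow> bool" where
  "decomposable n D \<longleftrightarrow> orientation n D \<and>
     (\<forall>J v. J \<subseteq> {..<n} \<and> v \<in> cube n \<and> 1 \<le> card J \<longrightarrow> (\<exists>j \<in> J. combed n D J v j))"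

definition is_sink :: "(nat set \<times> nat set) set \<Rightarrow> nat set set \<Rightarrow> nat set \<Rightarrow> bool" where
  "is_sink D F s \<longleftrightarrow> s \<in> F \<and> (\<forall>u \<in> F. adjacent s u \<longrightarrow> (u, s) \<in> D)"

definition uso :: "nat \<Rightarrow> (nat set \<times> nat set) set \<Rightarrow> bool" where
  "uso n D \<longleftrightarrow> orientation n D \<and>
     (\<forall>J v. J \<subseteq> {..<n} \<and> v \<in> cube n \<longrightarrow> (\<exists>!s. is_sink D (face n J v) s))"

end

theory Submission
  imports Defs
begin

lemma symdiff_insert: "j \<notin> u \<Longrightarrow> symdiff u (insert j u) = {j}"
  by (auto simp: symdiff_def)

lemma adj_insert: "j \<notin> u \<Longrightarrow> adjacent u (insert j u)"
  by (simp add: adjacent_def symdiff_insert)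

lemma adj_insert': "j \<notin> u \<Longrightarrow> adjacent (insert j u) u"
proof -
  assume "j \<notin> u"
  then have "symdiff (insert j u) u = {j}" by (auto simp: symdiff_def)
  then show ?thesis by (simp add: adjacent_def)
qed

lemma not_adj_self: "\<not> adjacent v v"
  by (simp add: adjacent_def symdiff_def)

lemma adj_eq_insert:
  assumes "adjacent a c" "j \<in> a" "j \<notin> c" shows "a = insert j c"
proof -
  have "card (symdiff a c) = 1" using assms(1) by (simp add: adjacent_def)
  then obtain x where x: "symdiff a c = {x}" by (auto simp: card_Suc_eq)
  have "j \<in> symdiff a c" using assms by (auto simp: symdiff_def)
  with x have "symdiff a c = {j}" by auto
  then show ?thesis using assms(2) by (auto simp: symdiff_def)
qed

lemma orient_asym:
  assumes "orientation n D" "(a,c) \<in> D" shows "(c,a) \<notin> D"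
  using assms unfolding orientation_def by blast

lemma orient_adj:
  assumes "orientation n D" "(a,c) \<in> D" shows "adjacent a c" "a \<in> cube n" "c \<in> cube n"
  using assms unfolding orientation_def by blast+

lemma face_upper:
  assumes "j \<in> J" "J \<subseteq> {..<n}"
  shows "face n (J-{j}) (insert j v) = {u \<in> face n J v. j \<in> u}"
  using assms unfolding face_def symdiff_def by auto

lemma face_lower:
  assumes "j \<in> J" "J \<subseteq> {..<n}"
  shows "face n (J-{j}) (v-{j}) = {u \<in> face n J v. j \<notin> u}"
  using assms unfolding face_def symdiff_def by auto

lemma insert_cube: "j < n \<Longrightarrow> v \<in> cube n \<Longrightarrow> insert j v \<in> cube n"
  by (auto simp: cube_def)

lemma diff_cube: "v \<in> cube n \<Longrightarrow> v - {j} \<in> cube n"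
  by (auto simp: cube_def)

lemma face_insert:
  assumes "u \<in> face n J v" "j \<in> J" "J \<subseteq> {..<n}"
  shows "insert j u \<in> face n J v"
  using assms unfolding face_def symdiff_def cube_def by auto

lemma face_empty: "v \<in> cube n \<Longrightarrow> face n {} v = {v}"
  unfolding face_def symdiff_def by auto

lemma face_sub: "face n J v \<subseteq> cube n" unfolding face_def by auto

lemma decomp_orient: "decomposable n D \<Longrightarrow> orientation n D"
  by (simp add: decomposable_def)

lemma combed_dir:
  assumes "combed n D J v j"
  shows "\<exists>b. \<forall>u\<in>face n J v. j \<notin> u \<longrightarrow>
           (if b then (u, insert j u) else (insert j u, u)) \<in> D"
proof -
  from assms consider "\<forall>u\<in>face n J v. j \<notin> u \<longrightarrow> (u, insert j u) \<in> D"
    | "\<forall>u\<in>face n J v. j \<notin> u \<longrightarrow> (insert j u, u) \<in> D"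
    unfolding combed_def by blast
  then show ?thesis
  proof cases
    case 1 then show ?thesis by (intro exI[of _ True]) simp
  next
    case 2 then show ?thesis by (intro exI[of _ False]) simp
  qed
qed

lemma sink_step_up:
  assumes D: "orientation n D" and J: "J \<subseteq> {..<n}" and j: "j \<in> J"
    and c: "\<forall>u\<in>face n J v. j \<notin> u \<longrightarrow> (u, insert j u) \<in> D"
  shows "is_sink D (face n J v) s \<longleftrightarrow> is_sink D (face n (J-{j}) (insert j v)) s"
proof
  assume s: "is_sink D (face n J v) s"
  have sF: "s \<in> face n J v" using s by (simp add: is_sink_def)
  have "j \<in> s"
  proof (rule ccontr)
    assume js: "j \<notin> s"
    have "(s, insert j s) \<in> D" using c sF js by blast
    moreover have "(insert j s, s) \<in> D"
      using s face_insert[OF sF j J] adj_insert[OF js] by (simp add: is_sink_def)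
    ultimately show False using orient_asym[OF D] by blast
  qed
  then show "is_sink D (face n (J-{j}) (insert j v)) s"
    using s face_upper[OF j J] by (auto simp: is_sink_def)
next
  assume s: "is_sink D (face n (J-{j}) (insert j v)) s"
  then have sF: "s \<in> face n J v" and js: "j \<in> s" using face_upper[OF j J] by (auto simp: is_sink_def)
  show "is_sink D (face n J v) s" unfolding is_sink_def
  proof (intro conjI ballI impI)
    fix u assume u: "u \<in> face n J v" "adjacent s u"
    show "(u, s) \<in> D"
    proof (cases "j \<in> u")
      case True then show ?thesis using s u face_upper[OF j J] by (auto simp: is_sink_def)
    next
      case False
      then have "s = insert j u" using adj_eq_insert u js by blast
      then show ?thesis using c u False by blast
    qed
  qed (rule sF)
qed

lemma sink_step_down:
  assumes D: "orientation n D" and J: "J \<subseteq> {..<n}" and j: "j \<in> J"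
    and c: "\<forall>u\<in>face n J v. j \<notin> u \<longrightarrow> (insert j u, u) \<in> D"
  shows "is_sink D (face n J v) s \<longleftrightarrow> is_sink D (face n (J-{j}) (v-{j})) s"
proof
  assume s: "is_sink D (face n J v) s"
  have sF: "s \<in> face n J v" using s by (simp add: is_sink_def)
  have "j \<notin> s"
  proof
    assume js: "j \<in> s"
    define t where "t = s - {j}"
    have st: "s = insert j t" "j \<notin> t" using js by (auto simp: t_def)
    have tF: "t \<in> face n J v" using sF j unfolding t_def face_def symdiff_def cube_def by auto
    have "(s, t) \<in> D" using c tF st by blast
    moreover have "(t, s) \<in> D"
      using s tF adj_insert'[OF st(2)] st by (simp add: is_sink_def)
    ultimately show False using orient_asym[OF D] by blast
  qed
  then show "is_sink D (face n (J-{j}) (v-{j})) s"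
    using s face_lower[OF j J] by (auto simp: is_sink_def)
next
  assume s: "is_sink D (face n (J-{j}) (v-{j})) s"
  then have sF: "s \<in> face n J v" and js: "j \<notin> s" using face_lower[OF j J] by (auto simp: is_sink_def)
  show "is_sink D (face n J v) s" unfolding is_sink_def
  proof (intro conjI ballI impI)
    fix u assume u: "u \<in> face n J v" "adjacent s u"
    show "(u, s) \<in> D"
    proof (cases "j \<in> u")
      case False then show ?thesis using s u face_lower[OF j J] by (auto simp: is_sink_def)
    next
      case True
      have "adjacent u s" using u(2) unfolding adjacent_def symdiff_def by (simp add: Un_commute)
      then have "u = insert j s" using adj_eq_insert True js by blast
      then show ?thesis using c sF js by blast
    qed
  qed (rule sF)
qed

lemma decomp_uso_aux:
  assumes dec: "decomposable n D"
  shows "\<forall>J v. card J = k \<longrightarrow> J \<subseteq> {..<n} \<longrightarrow> v \<in> cube n \<longrightarrow> (\<exists>!s. is_sink D (face n J v) s)"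
proof (induction k)
  case 0
  show ?case
  proof (intro allI impI)
    fix J v assume "card J = 0" "J \<subseteq> {..<n}" "v \<in> cube n"
    then have "J = {}" using finite_subset[of J "{..<n}"] by auto
    then have F: "face n J v = {v}" using face_empty \<open>v \<in> cube n\<close> by simp
    show "\<exists>!s. is_sink D (face n J v) s" unfolding F is_sink_def
      using not_adj_self by auto
  qed
next
  case (Suc k)
  show ?case
  proof (intro allI impI)
    fix J v assume cJ: "card J = Suc k" and J: "J \<subseteq> {..<n}" and v: "v \<in> cube n"
    have D: "orientation n D" using dec by (simp add: decomposable_def)
    obtain j where j: "j \<in> J" and cb: "combed n D J v j"
    proof -
      have "1 \<le> card J" using cJ by simp
      then show ?thesis using that dec J v unfolding decomposable_def by blast
    qed
    have jn: "j < n" using j J by auto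
    have cJ': "card (J-{j}) = k" using cJ j by simp
    have J': "J - {j} \<subseteq> {..<n}" using J by auto
    from cb consider "\<forall>u \<in> face n J v. j \<notin> u \<longrightarrow> (u, insert j u) \<in> D"
      | "\<forall>u \<in> face n J v. j \<notin> u \<longrightarrow> (insert j u, u) \<in> D"
      unfolding combed_def by blast
    then show "\<exists>!s. is_sink D (face n J v) s"
    proof cases
      case 1
      have "\<exists>!s. is_sink D (face n (J-{j}) (insert j v)) s"
        using Suc.IH cJ' J' insert_cube[OF jn v] by blast
      then show ?thesis using sink_step_up[OF D J j 1] by simp
    next
      case 2
      have "\<exists>!s. is_sink D (face n (J-{j}) (v-{j})) s"
        using Suc.IH cJ' J' diff_cube[OF v] by blast
      then show ?thesis using sink_step_down[OF D J j 2] by simp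
    qed
  qed
qed

lemma decomp_uso: "decomposable n D \<Longrightarrow> uso n D"
proof -
  assume d: "decomposable n D"
  have "\<forall>J v. J \<subseteq> {..<n} \<and> v \<in> cube n \<longrightarrow> (\<exists>!s. is_sink D (face n J v) s)"
  proof (intro allI impI)
    fix J v assume "J \<subseteq> {..<n} \<and> v \<in> cube n"
    then show "\<exists>!s. is_sink D (face n J v) s"
      using decomp_uso_aux[OF d, of "card J"] by blast
  qed
  then show ?thesis unfolding uso_def using decomp_orient[OF d] by blast
qed

definition restr :: "nat \<Rightarrow> nat set \<Rightarrow> nat set \<Rightarrow> (nat set \<times> nat set) set set" where
  "restr n J v = {D \<inter> (face n J v \<times> face n J v) | D. decomposable n D}"

definition Ed :: "nat \<Rightarrow> nat set \<Rightarrow> nat set \<Rightarrow> nat \<Rightarrow> bool \<Rightarrow> (nat set \<times> nat set) set" where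
  "Ed n J v j b = {(if b then (u, insert j u) else (insert j u, u)) | u. u \<in> face n J v \<and> j \<notin> u}"

definition Bd :: "nat \<Rightarrow> real" where
  "Bd k = 2 ^ (2 ^ (k+1)) / 2 ^ (k+2)"

lemma finite_cube: "finite (cube n)" by (simp add: cube_def)

lemma finite_restr: "finite (restr n J v)"
proof -
  have "restr n J v \<subseteq> Pow (cube n \<times> cube n)"
    unfolding restr_def using face_sub by blast
  then show ?thesis using finite_cube finite_subset by blast
qed

lemma decomp_split:
  assumes dec: "decomposable n D" and J: "J \<subseteq> {..<n}" and j: "j \<in> J"
    and cb: "combed n D J v j"
  shows "\<exists>b. D \<inter> (face n J v \<times> face n J v) =
      D \<inter> (face n (J-{j}) (v-{j}) \<times> face n (J-{j}) (v-{j})) \<union>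
      D \<inter> (face n (J-{j}) (insert j v) \<times> face n (J-{j}) (insert j v)) \<union> Ed n J v j b"
proof -
  have D: "orientation n D" using dec by (simp add: decomposable_def)
  obtain b where b: "\<forall>u\<in>face n J v. j \<notin> u \<longrightarrow>
           (if b then (u, insert j u) else (insert j u, u)) \<in> D"
    using combed_dir[OF cb] by blast
  have Fl: "face n (J-{j}) (v-{j}) = {u \<in> face n J v. j \<notin> u}" using face_lower[OF j J] .
  have Fu: "face n (J-{j}) (insert j v) = {u \<in> face n J v. j \<in> u}" using face_upper[OF j J] .
  have EdD: "Ed n J v j b \<subseteq> D" using b unfolding Ed_def by blast
  have EdF: "Ed n J v j b \<subseteq> face n J v \<times> face n J v"
  proof
    fix p assume "p \<in> Ed n J v j b"
    then obtain u where u: "u \<in> face n J v" "p = (if b then (u, insert j u) else (insert j u, u))"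
      unfolding Ed_def by blast
    have "insert j u \<in> face n J v" using face_insert[OF u(1) j J] .
    then show "p \<in> face n J v \<times> face n J v" using u by (cases b) auto
  qed
  have sub: "D \<inter> (face n J v \<times> face n J v) \<subseteq>
      D \<inter> (face n (J-{j}) (v-{j}) \<times> face n (J-{j}) (v-{j})) \<union>
      D \<inter> (face n (J-{j}) (insert j v) \<times> face n (J-{j}) (insert j v)) \<union> Ed n J v j b"
  proof
    fix p assume p: "p \<in> D \<inter> (face n J v \<times> face n J v)"
    obtain a c where pac: "p = (a, c)" by fastforce
    have ac: "(a,c) \<in> D" "a \<in> face n J v" "c \<in> face n J v" using p pac by auto
    have adj: "adjacent a c" using orient_adj[OF D ac(1)] by blast
    have adj': "adjacent c a" using adj unfolding adjacent_def symdiff_def by (simp add: Un_commute)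
    show "p \<in> D \<inter> (face n (J-{j}) (v-{j}) \<times> face n (J-{j}) (v-{j})) \<union>
      D \<inter> (face n (J-{j}) (insert j v) \<times> face n (J-{j}) (insert j v)) \<union> Ed n J v j b"
    proof (cases "j \<in> a")
      case ja: True
      show ?thesis
      proof (cases "j \<in> c")
        case True
        have "a \<in> face n (J-{j}) (insert j v)" "c \<in> face n (J-{j}) (insert j v)"
          using Fu ac ja True by blast+
        then show ?thesis using ac(1) pac by blast
      next
        case jc: False
        have aeq: "a = insert j c" using adj_eq_insert[OF adj ja jc] .
        have "(if b then (c, insert j c) else (insert j c, c)) \<in> D" using b ac(3) jc by blast
        then have "(if b then (c, a) else (a, c)) \<in> D" unfolding aeq .
        then have nb: "\<not> b" using orient_asym[OF D ac(1)] by (cases b) auto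
        have "(a,c) = (if b then (c, insert j c) else (insert j c, c))" using nb aeq by simp
        then have "(a,c) \<in> Ed n J v j b" using ac(3) jc unfolding Ed_def by blast
        then show ?thesis using pac by auto
      qed
    next
      case ja: False
      show ?thesis
      proof (cases "j \<in> c")
        case False
        have "a \<in> face n (J-{j}) (v-{j})" "c \<in> face n (J-{j}) (v-{j})"
          using Fl ac ja False by blast+
        then show ?thesis using ac(1) pac by blast
      next
        case jc: True
        have ceq: "c = insert j a" using adj_eq_insert[OF adj' jc ja] .
        have "(if b then (a, insert j a) else (insert j a, a)) \<in> D" using b ac(2) ja by blast
        then have "(if b then (a, c) else (c, a)) \<in> D" unfolding ceq .
        then have bb: "b" using orient_asym[OF D ac(1)] by (cases b) auto
        have "(a,c) = (if b then (a, insert j a) else (insert j a, a))" using bb ceq by simp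
        then have "(a,c) \<in> Ed n J v j b" using ac(2) ja unfolding Ed_def by blast
        then show ?thesis using pac by auto
      qed
    qed
  qed
  have sup: "D \<inter> (face n (J-{j}) (v-{j}) \<times> face n (J-{j}) (v-{j})) \<union>
      D \<inter> (face n (J-{j}) (insert j v) \<times> face n (J-{j}) (insert j v)) \<union> Ed n J v j b
      \<subseteq> D \<inter> (face n J v \<times> face n J v)"
  proof -
    have "face n (J-{j}) (v-{j}) \<subseteq> face n J v" "face n (J-{j}) (insert j v) \<subseteq> face n J v"
      using Fl Fu by auto
    then show ?thesis using EdD EdF by blast
  qed
  show ?thesis by (intro exI[of _ b]) (rule equalityI[OF sub sup])
qed

lemma Bd_step: "2 * real (Suc k) * (Bd k * Bd k) \<le> Bd (Suc k)"
proof -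
  have k: "real (Suc k) \<le> 2 ^ k"
  proof -
    have "Suc k \<le> 2 ^ k" by (induction k) auto
    then show ?thesis by (metis of_nat_le_iff of_nat_numeral of_nat_power)
  qed
  have e1: "(2::real) ^ (2 ^ (k+1)) * 2 ^ (2 ^ (k+1)) = 2 ^ (2 ^ (Suc k + 1))"
    by (simp add: power_add[symmetric])
  have e2: "(2::real) ^ (k+2) * 2 ^ (k+2) = 2 * (2 ^ k * 2 ^ (Suc k + 2))"
    by (simp add: power_add[symmetric])
  have "2 * real (Suc k) * (Bd k * Bd k) =
        real (Suc k) * 2 ^ (2 ^ (Suc k + 1)) / (2 ^ k * 2 ^ (Suc k + 2))"
    unfolding Bd_def using e1 e2 by (simp add: field_simps)
  also have "\<dots> \<le> 2 ^ k * 2 ^ (2 ^ (Suc k + 1)) / (2 ^ k * 2 ^ (Suc k + 2))"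
    using k by (intro divide_right_mono mult_right_mono) auto
  also have "\<dots> = Bd (Suc k)" unfolding Bd_def by simp
  finally show ?thesis .
qed

lemma restr_bound:
  "\<forall>J v. card J = k \<longrightarrow> J \<subseteq> {..<n} \<longrightarrow> v \<in> cube n \<longrightarrow> real (card (restr n J v)) \<le> Bd k"
proof (induction k)
  case 0
  show ?case
  proof (intro allI impI)
    fix J v assume "card J = 0" "J \<subseteq> {..<n}" "v \<in> cube n"
    then have "J = {}" using finite_subset[of J "{..<n}"] by auto
    then have F: "face n J v = {v}" using face_empty \<open>v \<in> cube n\<close> by simp
    have "restr n J v \<subseteq> {{}}"
    proof
      fix E assume "E \<in> restr n J v"
      then obtain D where "decomposable n D" "E = D \<inter> ({v} \<times> {v})"
        unfolding restr_def F by blast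
      moreover have "(v,v) \<notin> D"
        using orient_adj(1)[OF decomp_orient[OF \<open>decomposable n D\<close>]] not_adj_self by blast
      ultimately show "E \<in> {{}}" by auto
    qed
    then have "card (restr n J v) \<le> card {{}::(nat set \<times> nat set) set}"
      by (intro card_mono) simp_all
    then have "card (restr n J v) \<le> 1" by simp
    moreover have "(1::real) \<le> Bd 0" unfolding Bd_def by simp
    ultimately show "real (card (restr n J v)) \<le> Bd 0" by linarith
  qed
next
  case (Suc k)
  show ?case
  proof (intro allI impI)
    fix J v assume cJ: "card J = Suc k" and J: "J \<subseteq> {..<n}" and v: "v \<in> cube n"
    have fJ: "finite J" using J finite_subset by blast
    define R0 where "R0 j = restr n (J-{j}) (v-{j})" for j
    define R1 where "R1 j = restr n (J-{j}) (insert j v)" for j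
    define G where "G j b = (\<lambda>(A,B). A \<union> B \<union> Ed n J v j b) ` (R0 j \<times> R1 j)" for j b
    have sub: "restr n J v \<subseteq> (\<Union>j\<in>J. \<Union>b\<in>(UNIV::bool set). G j b)"
    proof
      fix E assume "E \<in> restr n J v"
      then obtain D where dec: "decomposable n D" and E: "E = D \<inter> (face n J v \<times> face n J v)"
        unfolding restr_def by blast
      have "1 \<le> card J" using cJ by simp
      then obtain j where j: "j \<in> J" and cb: "combed n D J v j"
        using dec J v unfolding decomposable_def by blast
      obtain b where eq: "D \<inter> (face n J v \<times> face n J v) =
        D \<inter> (face n (J-{j}) (v-{j}) \<times> face n (J-{j}) (v-{j})) \<union>
        D \<inter> (face n (J-{j}) (insert j v) \<times> face n (J-{j}) (insert j v)) \<union> Ed n J v j b"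
        using decomp_split[OF dec J j cb] by blast
      define A where "A = D \<inter> (face n (J-{j}) (v-{j}) \<times> face n (J-{j}) (v-{j}))"
      define B where "B = D \<inter> (face n (J-{j}) (insert j v) \<times> face n (J-{j}) (insert j v))"
      have AB: "(A, B) \<in> R0 j \<times> R1 j" unfolding R0_def R1_def restr_def A_def B_def
        using dec by blast
      have "E = (\<lambda>(A,B). A \<union> B \<union> Ed n J v j b) (A, B)" using E eq A_def B_def by simp
      then have "E \<in> G j b" unfolding G_def using AB by (rule image_eqI)
      then show "E \<in> (\<Union>j\<in>J. \<Union>b\<in>(UNIV::bool set). G j b)" using j by blast
    qed
    have Gb: "real (card (G j b)) \<le> Bd k * Bd k" if j: "j \<in> J" for j b
    proof -
      have cJ': "card (J-{j}) = k" using cJ j by simp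
      have J': "J - {j} \<subseteq> {..<n}" using J by auto
      have jn: "j < n" using j J by auto
      have b0: "real (card (R0 j)) \<le> Bd k" unfolding R0_def
        using Suc.IH cJ' J' diff_cube[OF v] by blast
      have b1: "real (card (R1 j)) \<le> Bd k" unfolding R1_def
        using Suc.IH cJ' J' insert_cube[OF jn v] by blast
      have "card (G j b) \<le> card (R0 j \<times> R1 j)" unfolding G_def by (rule card_image_le) (simp add: R0_def R1_def finite_restr)
      also have "\<dots> = card (R0 j) * card (R1 j)" by (simp add: card_cartesian_product)
      finally have "real (card (G j b)) \<le> real (card (R0 j)) * real (card (R1 j))"
        by (metis of_nat_le_iff of_nat_mult)
      also have "\<dots> \<le> Bd k * Bd k" using b0 b1 by (intro mult_mono) auto
      finally show ?thesis .
    qed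
    have fG: "finite (G j b)" for j b unfolding G_def by (simp add: R0_def R1_def finite_restr)
    have "card (restr n J v) \<le> card (\<Union>j\<in>J. \<Union>b\<in>(UNIV::bool set). G j b)"
      using sub fJ fG by (intro card_mono) auto
    also have "\<dots> \<le> (\<Sum>j\<in>J. card (\<Union>b\<in>(UNIV::bool set). G j b))"
      using fJ by (rule card_UN_le)
    also have "\<dots> \<le> (\<Sum>j\<in>J. \<Sum>b\<in>(UNIV::bool set). card (G j b))"
      by (intro sum_mono card_UN_le) simp
    finally have N: "card (restr n J v) \<le> (\<Sum>j\<in>J. \<Sum>b\<in>(UNIV::bool set). card (G j b))" .
    have "real (card (restr n J v)) \<le> real (\<Sum>j\<in>J. \<Sum>b\<in>(UNIV::bool set). card (G j b))"
      using N by (simp only: of_nat_le_iff)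
    also have "\<dots> = (\<Sum>j\<in>J. \<Sum>b\<in>(UNIV::bool set). real (card (G j b)))"
      by (simp only: of_nat_sum)
    also have "\<dots> \<le> (\<Sum>j\<in>J. \<Sum>b\<in>(UNIV::bool set). Bd k * Bd k)"
      using Gb by (intro sum_mono) auto
    also have "\<dots> = 2 * real (Suc k) * (Bd k * Bd k)" using cJ by simp
    also have "\<dots> \<le> Bd (Suc k)" by (rule Bd_step)
    finally show "real (card (restr n J v)) \<le> Bd (Suc k)" .
  qed
qed

lemma upper: "real (card {D. decomposable n D}) \<le> 2 powr (2 * 2 ^ n)"
proof -
  have F: "face n {..<n} {} = cube n" unfolding face_def symdiff_def cube_def by auto
  have "{D. decomposable n D} \<subseteq> restr n {..<n} {}"
  proof
    fix D assume "D \<in> {D. decomposable n D}"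
    then have d: "decomposable n D" by simp
    then have "D \<subseteq> cube n \<times> cube n" unfolding decomposable_def orientation_def by blast
    then have "D = D \<inter> (face n {..<n} {} \<times> face n {..<n} {})" using F by blast
    then show "D \<in> restr n {..<n} {}" unfolding restr_def using d by blast
  qed
  then have "card {D. decomposable n D} \<le> card (restr n {..<n} {})"
    using finite_restr by (rule card_mono[rotated])
  also have "real \<dots> \<le> Bd n" using restr_bound[of n n] by (simp add: cube_def)
  also have "\<dots> \<le> 2 ^ (2 ^ (n+1))"
  proof -
    have "(1::real) \<le> 4 * 2 ^ n" using one_le_power[of "2::real" n] by linarith
    then show ?thesis unfolding Bd_def by (simp add: field_simps)
  qed
  also have "\<dots> = 2 powr (2 * 2 ^ n)"
    by (simp add: powr_realpow[symmetric])
  finally show ?thesis by simp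
qed

definition Df :: "nat \<Rightarrow> (nat \<Rightarrow> nat set \<Rightarrow> bool) \<Rightarrow> (nat set \<times> nat set) set" where
  "Df n f = {p. \<exists>u i. u \<in> cube n \<and> i < n \<and> i \<notin> u \<and>
              (if f i u then p = (u, insert i u) else p = (insert i u, u))}"

lemma insert_inj_aux: "insert i u = insert i' u \<Longrightarrow> i \<notin> u \<Longrightarrow> i' \<notin> u \<Longrightarrow> i = i'"
  by blast

lemma Df_memE:
  assumes "p \<in> Df n f"
  obtains u i where "u \<in> cube n" "i < n" "i \<notin> u" "f i u" "p = (u, insert i u)"
    | u i where "u \<in> cube n" "i < n" "i \<notin> u" "\<not> f i u" "p = (insert i u, u)"
proof -
  obtain u i where ui: "u \<in> cube n" "i < n" "i \<notin> u"
      "if f i u then p = (u, insert i u) else p = (insert i u, u)"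
    using assms unfolding Df_def by blast
  show ?thesis
  proof (cases "f i u")
    case True then show ?thesis using ui that(1)[of u i] by simp
  next
    case False then show ?thesis using ui that(2)[of u i] by simp
  qed
qed

lemma Df_mem1:
  assumes "i \<notin> u" "u \<in> cube n" "i < n"
  shows "(u, insert i u) \<in> Df n f \<longleftrightarrow> f i u"
proof
  assume "(u, insert i u) \<in> Df n f"
  then show "f i u"
  proof (cases rule: Df_memE)
    case (1 u' i')
    then have "u' = u" "insert i u = insert i' u" by auto
    then have "i = i'" using insert_inj_aux assms(1) 1(3) by blast
    then show ?thesis using 1 \<open>u' = u\<close> by simp
  next
    case (2 u' i')
    then have "u = insert i' u'" "insert i u = u'" by auto
    then have "i \<in> u" by blast
    then show ?thesis using assms(1) by blast
  qed
next
  assume "f i u"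
  then show "(u, insert i u) \<in> Df n f" unfolding Df_def using assms by auto
qed

lemma Df_mem2:
  assumes "i \<notin> u" "u \<in> cube n" "i < n"
  shows "(insert i u, u) \<in> Df n f \<longleftrightarrow> \<not> f i u"
proof
  assume "(insert i u, u) \<in> Df n f"
  then show "\<not> f i u"
  proof (cases rule: Df_memE)
    case (1 u' i')
    then have "u = insert i' u'" "insert i u = u'" by auto
    then have "i \<in> u" by blast
    then show ?thesis using assms(1) by blast
  next
    case (2 u' i')
    then have "u' = u" "insert i u = insert i' u" by auto
    then have "i = i'" using insert_inj_aux assms(1) 2(3) by blast
    then show ?thesis using 2 \<open>u' = u\<close> by simp
  qed
next
  assume "\<not> f i u"
  then show "(insert i u, u) \<in> Df n f" unfolding Df_def using assms by auto
qed

lemma sd_single: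
  assumes x: "symdiff u w = {i}" and iw: "i \<in> w"
  shows "i \<notin> u" "w = insert i u"
proof -
  have h: "(y \<in> u \<and> y \<notin> w \<or> y \<in> w \<and> y \<notin> u) \<longleftrightarrow> y = i" for y
  proof -
    have "y \<in> symdiff u w \<longleftrightarrow> y = i" using x by simp
    then show ?thesis unfolding symdiff_def by blast
  qed
  show "i \<notin> u" using h[of i] iw by blast
  show "w = insert i u"
  proof (rule set_eqI)
    fix y show "y \<in> w \<longleftrightarrow> y \<in> insert i u" using h[of y] iw by blast
  qed
qed

lemma adj_cases:
  assumes "adjacent u w"
  obtains i where "i \<notin> u" "w = insert i u" | i where "i \<notin> w" "u = insert i w"
proof -
  have "card (symdiff u w) = 1" using assms by (simp add: adjacent_def)
  then obtain i where x: "symdiff u w = {i}" by (auto simp: card_Suc_eq)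
  show ?thesis
  proof (cases "i \<in> w")
    case True
    then show ?thesis using that sd_single[OF x True] by blast
  next
    case False
    have x': "symdiff w u = {i}" using x unfolding symdiff_def by blast
    have "i \<in> u" using x False unfolding symdiff_def by blast
    then show ?thesis using that sd_single[OF x'] by blast
  qed
qed

lemma Df_orient: "orientation n (Df n f)"
  unfolding orientation_def
proof (intro conjI ballI impI)
  show "Df n f \<subseteq> cube n \<times> cube n"
  proof
    fix p assume "p \<in> Df n f"
    then show "p \<in> cube n \<times> cube n"
      by (cases rule: Df_memE) (auto simp: insert_cube)
  qed
next
  fix p assume "p \<in> Df n f"
  then show "case p of (u, w) \<Rightarrow> adjacent u w"
    by (cases rule: Df_memE) (auto simp: adj_insert adj_insert')
next
  fix u w assume u: "u \<in> cube n" and w: "w \<in> cube n" and adj: "adjacent u w"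
  from adj show "((u, w) \<in> Df n f) = ((w, u) \<notin> Df n f)"
  proof (cases rule: adj_cases)
    case (1 i)
    have "i < n" using w 1 by (auto simp: cube_def)
    then have "(u, w) \<in> Df n f \<longleftrightarrow> f i u" "(w, u) \<in> Df n f \<longleftrightarrow> \<not> f i u"
      using Df_mem1[OF 1(1) u \<open>i < n\<close>, of f] Df_mem2[OF 1(1) u \<open>i < n\<close>, of f] 1(2) by simp_all
    then show ?thesis by simp
  next
    case (2 i)
    have "i < n" using u 2 by (auto simp: cube_def)
    then have "(w, u) \<in> Df n f \<longleftrightarrow> f i w" "(u, w) \<in> Df n f \<longleftrightarrow> \<not> f i w"
      using Df_mem1[OF 2(1) w \<open>i < n\<close>, of f] Df_mem2[OF 2(1) w \<open>i < n\<close>, of f] 2(2) by simp_all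
    then show ?thesis by simp
  qed
qed

definition fS :: "nat set set \<Rightarrow> nat \<Rightarrow> nat set \<Rightarrow> bool" where
  "fS S i u = (i \<noteq> 0 \<or> u \<in> S)"

lemma Df_decomp: "decomposable n (Df n (fS S))"
  unfolding decomposable_def
proof (intro conjI allI impI)
  show "orientation n (Df n (fS S))" by (rule Df_orient)
next
  fix J v assume a: "J \<subseteq> {..<n} \<and> v \<in> cube n \<and> 1 \<le> card J"
  then have J: "J \<subseteq> {..<n}" and v: "v \<in> cube n" and cJ: "1 \<le> card J" by auto
  show "\<exists>j\<in>J. combed n (Df n (fS S)) J v j"
  proof (cases "\<exists>j\<in>J. j \<noteq> 0")
    case True
    then obtain j where j: "j \<in> J" "j \<noteq> 0" by blast
    have jn: "j < n" using j J by auto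
    have "\<forall>u \<in> face n J v. j \<notin> u \<longrightarrow> (u, insert j u) \<in> Df n (fS S)"
    proof (intro ballI impI)
      fix u assume "u \<in> face n J v" "j \<notin> u"
      then have "u \<in> cube n" "j \<notin> u" using face_sub by blast+
      then show "(u, insert j u) \<in> Df n (fS S)"
        using Df_mem1[OF \<open>j \<notin> u\<close> \<open>u \<in> cube n\<close> jn] j(2) by (simp add: fS_def)
    qed
    then show ?thesis unfolding combed_def using j by blast
  next
    case False
    then have J0: "J \<subseteq> {0}" by blast
    have "J \<noteq> {}" using cJ by auto
    then have J0': "J = {0}" using J0 by blast
    have n0: "0 < n" using J J0' by auto
    have uq: "u = v - {0}" if "u \<in> face n J v" "0 \<notin> u" for u
      using that J0' unfolding face_def symdiff_def by auto
    have vc: "v - {0} \<in> cube n" using diff_cube[OF v] .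
    show ?thesis
    proof (cases "fS S 0 (v - {0})")
      case True
      have "\<forall>u \<in> face n J v. 0 \<notin> u \<longrightarrow> (u, insert 0 u) \<in> Df n (fS S)"
      proof (intro ballI impI)
        fix u assume "u \<in> face n J v" "0 \<notin> u"
        then have "u = v - {0}" using uq by blast
        then show "(u, insert 0 u) \<in> Df n (fS S)"
          using Df_mem1[of 0 "v - {0}" n "fS S"] vc n0 True by simp
      qed
      then show ?thesis unfolding combed_def using J0' by blast
    next
      case False
      have "\<forall>u \<in> face n J v. 0 \<notin> u \<longrightarrow> (insert 0 u, u) \<in> Df n (fS S)"
      proof (intro ballI impI)
        fix u assume "u \<in> face n J v" "0 \<notin> u"
        then have "u = v - {0}" using uq by blast
        then show "(insert 0 u, u) \<in> Df n (fS S)"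
          using Df_mem2[of 0 "v - {0}" n "fS S"] vc n0 False by simp
      qed
      then show ?thesis unfolding combed_def using J0' by blast
    qed
  qed
qed

lemma lower:
  assumes n: "1 \<le> n"
  shows "2 powr (1/2 * 2 ^ n) \<le> real (card {D. decomposable n D})"
proof -
  define L where "L = {u \<in> cube n. 0 \<notin> u}"
  have L: "L = Pow ({..<n} - {0})" unfolding L_def cube_def by auto
  have "card ({..<n} - {0}) = n - 1" using n by (simp add: card_Diff_singleton)
  then have cL: "card L = 2 ^ (n - 1)" unfolding L by (simp add: card_Pow)
  have inj: "inj_on (\<lambda>S. Df n (fS S)) (Pow L)"
  proof (rule inj_onI)
    fix S S' assume S: "S \<in> Pow L" and S': "S' \<in> Pow L" and eq: "Df n (fS S) = Df n (fS S')"
    have "u \<in> S \<longleftrightarrow> u \<in> S'" if "u \<in> L" for u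
    proof -
      have u: "0 \<notin> u" "u \<in> cube n" using that L_def by auto
      have "u \<in> S \<longleftrightarrow> (u, insert 0 u) \<in> Df n (fS S)"
        using Df_mem1[OF u(1) u(2)] n by (simp add: fS_def)
      also have "\<dots> \<longleftrightarrow> (u, insert 0 u) \<in> Df n (fS S')" using eq by simp
      also have "\<dots> \<longleftrightarrow> u \<in> S'"
        using Df_mem1[OF u(1) u(2)] n by (simp add: fS_def)
      finally show ?thesis .
    qed
    then show "S = S'" using S S' by blast
  qed
  have sub: "(\<lambda>S. Df n (fS S)) ` Pow L \<subseteq> {D. decomposable n D}"
    using Df_decomp by blast
  have fin: "finite {D. decomposable n D}"
  proof -
    have "{D. decomposable n D} \<subseteq> Pow (cube n \<times> cube n)"
      unfolding decomposable_def orientation_def by blast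
    then show ?thesis using finite_cube finite_subset by blast
  qed
  have "card (Pow L) = 2 ^ (2 ^ (n - 1))"
    using cL L by (simp add: card_Pow)
  then have "card ((\<lambda>S. Df n (fS S)) ` Pow L) = 2 ^ (2 ^ (n - 1))"
    using card_image[OF inj] by simp
  then have c: "2 ^ (2 ^ (n - 1)) \<le> card {D. decomposable n D}"
    using card_mono[OF fin sub] by simp
  have e: "1/2 * (2::real) ^ n = real (2 ^ (n - 1))"
  proof -
    have "(2::real) ^ n = 2 * 2 ^ (n - 1)" using n
      by (metis Suc_diff_1 less_le_trans zero_less_one power_Suc)
    then show ?thesis by simp
  qed
  have "2 powr (1/2 * 2 ^ n) = (2::real) ^ (2 ^ (n - 1))"
    unfolding e by (rule powr_realpow) simp
  also have "\<dots> \<le> real (card {D. decomposable n D})"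
    using c by (metis of_nat_le_iff of_nat_numeral of_nat_power)
  finally show ?thesis .
qed

theorem theorem9:
  shows "(\<forall>n D. decomposable n D \<longrightarrow> uso n D) \<and>
         (\<exists>c1 c2 :: real. 0 < c1 \<and> 0 < c2 \<and>
            (\<exists>N. \<forall>n \<ge> N.
               2 powr (c1 * 2 ^ n) \<le> real (card {D. decomposable n D}) \<and>
               real (card {D. decomposable n D}) \<le> 2 powr (c2 * 2 ^ n)))"
proof (intro conjI allI impI)
  fix n D assume "decomposable n D" then show "uso n D" by (rule decomp_uso)
next
  show "\<exists>c1 c2 :: real. 0 < c1 \<and> 0 < c2 \<and>
            (\<exists>N. \<forall>n \<ge> N.
               2 powr (c1 * 2 ^ n) \<le> real (card {D. decomposable n D}) \<and>
               real (card {D. decomposable n D}) \<le> 2 powr (c2 * 2 ^ n))"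
  proof (rule exI[of _ "1/2"], rule exI[of _ 2], intro conjI exI[of _ 1] allI impI)
    fix n :: nat assume "1 \<le> n"
    then show "2 powr (1/2 * 2 ^ n) \<le> real (card {D. decomposable n D})" by (rule lower)
  next
    fix n :: nat
    show "real (card {D. decomposable n D}) \<le> 2 powr (2 * 2 ^ n)" by (rule upper)
  qed simp_all
qed

end
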